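(* Let $C$ be a smooth projective curve of genus two defined over $\mathbb{Q}$ by a globally minimal Weierstrass equation of the form $y^2+Q(x)y=P(x)$, where $P(x),Q(x)\in\mathbb{Z}[x]$, $\deg Q(x)\le 2$ and $P(x)$ is monic of degree $5$, with odd discriminant $\Delta$. Assume moreover that $C$ has at least two $\mathbb{Q}$-rational Weierstrass points. Then $C$ can be described by a Weierstrass equation of the form $E:\ y^2=xF(x)$, where $F(x)\in\mathbb{Z}[x]$ is a monic polynomial of degree $4$, and $\Delta_E=2^{40}\Delta$. In particular, $E$ is minimal over $\mathbb{Z}_p$ for every prime $p\neq 2$.
   Context: A Weierstrass equation of a genus two curve $C$ over a field $K$ of characteristic $\neq 2$ is an equation $y^2+Q(x)y=P(x)$ with $P,Q\in K[x]$, $\deg Q\le 3$, $\deg P\le 6$, such that $x$ generates the subfield of $K(C)$ fixed by the hyperelliptic involution and $K(C)=K(x)[y]$. Its discriminant is $\Delta_E=2^{-12}\operatorname{disc}(4P(x)+Q(x)^2)$. Two Weierstrass equations describe the same curve iff they are related by a change of variables $u=(ax+b)/(cx+d)$, $v=(ey+H(x))/(cx+d)^3$ with $\begin{pmatrix}a&b\\c&d\end{pmatrix}\in\mathrm{GL}_2(K)$, $e\in K^\times$, $H\in K[x]$; then $\Delta_{E'}=e^{20}(ad-bc)^{-30}\Delta_E$. Over a discrete valuation ring $\mathcal{O}_K$, a Weierstrass equation is integral if $P,Q\in\mathcal{O}_K[x]$, and minimal if it is integral and the valuation of its discriminant is smallest among all integral Weierstrass equations describing $C$. Over $\mathbb{Q}$,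 a Weierstrass equation is globally minimal if it is minimal over $\mathbb{Z}_p$ for every prime $p$; the discriminant of $C$ is the discriminant of a globally minimal equation. Weierstrass points of $C$ are the fixed points of the hyperelliptic involution; they are $\mathbb{Q}$-rational if defined over $\mathbb{Q}$. *)

theory Defs
  imports "HOL-Computational_Algebra.Computational_Algebra" "Subresultants.Resultant_Prelim"
begin

(* A Weierstrass equation  y^2 + Q(x) y = P(x)  over Q is encoded by the pair (P, Q). *)
type_synonym weq = "rat poly \<times> rat poly"

definition poly_disc :: "rat poly \<Rightarrow> rat" where
  "poly_disc f = (let n = degree f in
      (-1) ^ (n * (n - 1) div 2) * resultant f (pderiv f) / lead_coeff f)"

(* Discriminant of f viewed as a binary form of degree 6 (degree of f at most 6). *)
definition sextic_disc :: "rat poly \<Rightarrow> rat" where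
  "sextic_disc f = (if degree f = 6 then poly_disc f
                    else if degree f = 5 then (lead_coeff f)^2 * poly_disc f
                    else 0)"

definition weq_disc :: "weq \<Rightarrow> rat" where
  "weq_disc E = sextic_disc (Polynomial.smult 4 (fst E) + (snd E)^2) / 2 ^ 12"

(* Weierstrass equation of a genus two curve: deg Q <= 3, deg P <= 6, nonzero discriminant
   (equivalently 4P+Q^2 is squarefree of degree 5 or 6). *)
definition is_weq :: "weq \<Rightarrow> bool" where
  "is_weq E \<longleftrightarrow> degree (snd E) \<le> 3 \<and> degree (fst E) \<le> 6 \<and> weq_disc E \<noteq> 0"

(* (c x + d)^n f((a x + b)/(c x + d)) for deg f <= n *)
definition hom_subst :: "nat \<Rightarrow> rat \<Rightarrow> rat \<Rightarrow> rat \<Rightarrow> rat \<Rightarrow> rat poly \<Rightarrow> rat poly" where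
  "hom_subst n a b c d f =
     (\<Sum>i\<le>n. Polynomial.smult (coeff f i) ([:b, a:] ^ i * [:d, c:] ^ (n - i)))"

(* E' (in variables u, v) is obtained from E (in variables x, y) by the change of variables
   u = (a x + b)/(c x + d),  v = (e y + H(x))/(c x + d)^3:
   substituting into v^2 + Q'(u) v - P'(u) and multiplying by (c x + d)^6 gives
   e^2 (y^2 + Q(x) y - P(x)). *)
definition weq_change :: "rat \<Rightarrow> rat \<Rightarrow> rat \<Rightarrow> rat \<Rightarrow> rat \<Rightarrow> rat poly \<Rightarrow> weq \<Rightarrow> weq \<Rightarrow> bool" where
  "weq_change a b c d e H E E' \<longleftrightarrow>
     a * d - b * c \<noteq> 0 \<and> e \<noteq> 0 \<and>
     Polynomial.smult 2 H + hom_subst 3 a b c d (snd E') = Polynomial.smult e (snd E) \<and>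
     H^2 + hom_subst 3 a b c d (snd E') * H - hom_subst 6 a b c d (fst E')
       = - Polynomial.smult (e^2) (fst E)"

definition same_curve :: "weq \<Rightarrow> weq \<Rightarrow> bool" where
  "same_curve E E' \<longleftrightarrow> (\<exists>a b c d e H. weq_change a b c d e H E E')"

definition rat_val :: "nat \<Rightarrow> rat \<Rightarrow> int" where
  "rat_val p q = (case quotient_of q of (n, m) \<Rightarrow>
      int (multiplicity (int p) n) - int (multiplicity (int p) m))"

definition p_integral :: "nat \<Rightarrow> rat \<Rightarrow> bool" where
  "p_integral p q \<longleftrightarrow> \<not> (int p dvd snd (quotient_of q))"

definition integral_at :: "nat \<Rightarrow> weq \<Rightarrow> bool" where
  "integral_at p E \<longleftrightarrow> (\<forall>i. p_integral p (coeff (fst E) i) \<and> p_integral p (coeff (snd E) i))"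

definition minimal_at :: "nat \<Rightarrow> weq \<Rightarrow> bool" where
  "minimal_at p E \<longleftrightarrow> is_weq E \<and> integral_at p E \<and>
     (\<forall>E'. is_weq E' \<and> same_curve E E' \<and> integral_at p E' \<longrightarrow>
            rat_val p (weq_disc E) \<le> rat_val p (weq_disc E'))"

definition globally_minimal :: "weq \<Rightarrow> bool" where
  "globally_minimal E \<longleftrightarrow> (\<forall>p. prime p \<longrightarrow> minimal_at p E)"

(* Q-rational Weierstrass points, recorded by their x-coordinate in P^1(Q) (None = infinity):
   the roots of the binary sextic form attached to 4P + Q^2. *)
definition rat_weierstrass_points :: "weq \<Rightarrow> rat option set" where
  "rat_weierstrass_points E =
     (let f = Polynomial.smult 4 (fst E) + (snd E)^2 in
       Some ` {r. poly f r = 0} \<union> (if degree f < 6 then {None} else {}))"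

abbreviation rpoly :: "int poly \<Rightarrow> rat poly" where
  "rpoly f \<equiv> map_poly of_int f"

end

theory Submission
  imports Defs "Subresultants.Subresultant"
begin

lemma res_step:
  fixes F B G H :: "'a :: idom poly"
  assumes FGH: "F + B * G = H" and dfg: "degree F \<ge> degree G"
    and dgh: "degree G > degree H" and H0: "H \<noteq> 0"
  shows "resultant F G = (-1)^(degree F * degree G) * lead_coeff G ^ (degree F - degree H) * resultant G H"
proof (cases "degree H = 0")
  case False
  from BT_lemma_1_12[OF FGH dfg, of 0] dgh False
  have "subresultant 0 F G = Polynomial.smult ((-1)^(degree F * degree G) * lead_coeff G ^ (degree F - degree H)) (subresultant 0 G H)"
    by auto
  from arg_cong[OF this, of "\<lambda>x. coeff x 0"] show ?thesis
    by (simp add: coeff_subresultant_0_0_resultant)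
next
  case True
  then obtain h where h: "H = [:h:]" by (metis degree_0_id)
  have ch: "degree G > degree H \<or> H = 0 \<and> F \<noteq> 0 \<and> G \<noteq> 0" using dgh by auto
  from BT_lemma_1_13'[OF FGH dfg ch, of 0] dgh True H0
  have "subresultant 0 F G = Polynomial.smult ((-1)^(degree F * degree G) * lead_coeff G ^ (degree F) * lead_coeff H ^ (degree G - 1)) H"
    by auto
  from arg_cong[OF this, of "\<lambda>x. coeff x 0"] True h dgh show ?thesis
    apply (simp add: coeff_subresultant_0_0_resultant)
    by (metis (no_types, lifting) Suc_pred mult.commute power_Suc)
qed

lemma res_zero_dvd:
  fixes F B G :: "'a :: idom poly"
  assumes "F = B * G" "degree F \<ge> degree G" "degree G > 0"
  shows "resultant F G = 0"
proof -
  from subresultant_product[OF assms(1,2), of 0] assms(3)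
  have "subresultant 0 F G = 0" by simp
  thus ?thesis by (simp add: subresultant_resultant)
qed

lemma res_pcompose_lin:
  fixes F G :: "'a :: field poly"
  assumes al: "al \<noteq> 0"
  shows "resultant (pcompose F [:r, al:]) (pcompose G [:r, al:]) = al ^ (degree F * degree G) * resultant F G"
proof (induction "degree F + degree G" arbitrary: F G rule: less_induct)
  case less
  let ?L = "[:r, al:]"
  have dL: "degree ?L = 1" using al by simp
  have dc: "degree (pcompose p ?L) = degree p" for p :: "'a poly" using al by (simp add: degree_pcompose dL)
  have lc: "lead_coeff (pcompose p ?L) = lead_coeff p * al ^ degree p" for p :: "'a poly"
    using lead_coeff_comp[of ?L p] dL al by simp
  have main: "resultant (pcompose F' ?L) (pcompose G' ?L) = al ^ (degree F' * degree G') * resultant F' G'"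
    if le: "degree F' \<ge> degree G'" and sm: "degree F' + degree G' \<le> degree F + degree G" for F' G'
  proof (cases "degree G' = 0")
    case True
    then obtain c where c: "G' = [:c:]" by (metis degree_0_id)
    show ?thesis using c al by (simp add: dc)
  next
    case False
    define H where "H = F' mod G'"
    define B where "B = - (F' div G')"
    have FGH: "F' + B * G' = H" unfolding H_def B_def
      by (metis add_diff_cancel_left' diff_conv_add_uminus div_mult_mod_eq mult_minus_left)
    have FGH': "pcompose F' ?L + pcompose B ?L * pcompose G' ?L = pcompose H ?L"
      using FGH by (metis pcompose_add pcompose_mult)
    have G0: "G' \<noteq> 0" using False by auto
    show ?thesis
    proof (cases "H = 0")
      case True
      have e1: "F' = (-B) * G'" using FGH True by (simp add: eq_neg_iff_add_eq_0)
      have e2: "pcompose F' ?L = pcompose (-B) ?L * pcompose G' ?L" using e1 by (metis pcompose_mult)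
      show ?thesis using res_zero_dvd[OF e1 le] res_zero_dvd[OF e2] False le al by (simp add: dc)
    next
      case H0: False
      have dh: "degree H < degree G'" using degree_mod_less[of G' F'] G0 H0 unfolding H_def by auto
      have IH: "resultant (pcompose G' ?L) (pcompose H ?L) = al ^ (degree G' * degree H) * resultant G' H"
        by (rule less(1)) (use dh le sm in linarith)
      have HL0: "pcompose H ?L \<noteq> 0" 
      proof
        assume "pcompose H ?L = 0"
        hence "lead_coeff H * al ^ degree H = 0" using lc[of H] by simp
        thus False using H0 al by simp
      qed
      note s1 = res_step[OF FGH le dh H0]
      note s2 = res_step[OF FGH', unfolded dc, OF le dh HL0]
      have "resultant (pcompose F' ?L) (pcompose G' ?L) = (-1)^(degree F' * degree G') * (lead_coeff G' * al ^ degree G') ^ (degree F' - degree H) * (al ^ (degree G' * degree H) * resultant G' H)"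
      proof -
        have lcG: "coeff (pcompose G' ?L) (degree G') = lead_coeff G' * al ^ degree G'"
          using lc[of G'] dc[of G'] by metis
        show ?thesis by (simp only: s2 IH lcG)
      qed
      also have "\<dots> = al ^ (degree G' * (degree F' - degree H) + degree G' * degree H) * ((-1)^(degree F' * degree G') * lead_coeff G' ^ (degree F' - degree H) * resultant G' H)"
        proof -
        have "(al ^ degree G') ^ (degree F' - degree H) = al ^ (degree G' * (degree F' - degree H))"
          by (simp add: power_mult)
        thus ?thesis by (simp only: power_mult_distrib power_add mult_ac)
      qed
      also have "degree G' * (degree F' - degree H) + degree G' * degree H = degree F' * degree G'"
        using dh le by (simp add: diff_mult_distrib2)
      finally show ?thesis using s1 by simp
    qed
  qed
  show ?case
  proof (cases "degree F \<ge> degree G")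
    case True thus ?thesis using main by simp
  next
    case False
    have "resultant (pcompose F ?L) (pcompose G ?L) = (-1)^(degree F * degree G) * resultant (pcompose G ?L) (pcompose F ?L)"
      using al by (subst resultant_swap) (simp add: dc)
    also have "\<dots> = (-1)^(degree F * degree G) * (al ^ (degree G * degree F) * resultant G F)"
      using main[of F G] False by simp
    also have "\<dots> = al ^ (degree F * degree G) * resultant F G"
      by (subst (2) resultant_swap) (simp add: mult.commute)
    finally show ?thesis .
  qed
qed

lemma poly_disc_lin5:
  fixes f :: "rat poly"
  assumes al: "al \<noteq> 0" and c: "c \<noteq> 0" and df: "degree f = 5"
  shows "poly_disc (Polynomial.smult c (pcompose f [:r, al:])) = c ^ 8 * al ^ 20 * poly_disc f"
proof -
  let ?L = "[:r, al:]"
  have dL: "degree ?L = 1" using al by simp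
  have dc: "degree (pcompose p ?L) = degree p" for p :: "rat poly" using al by (simp add: degree_pcompose dL)
  have lc: "lead_coeff (pcompose p ?L) = lead_coeff p * al ^ degree p" for p :: "rat poly"
    using lead_coeff_comp[of ?L p] dL al by simp
  have dd: "degree (pderiv f) = 4" using df by (simp add: degree_pderiv)
  have pd: "pderiv (Polynomial.smult c (pcompose f ?L)) = Polynomial.smult (c * al) (pcompose (pderiv f) ?L)"
    by (simp add: pderiv_smult pderiv_pcompose pderiv_pCons)
  have dg: "degree (Polynomial.smult c (pcompose f ?L)) = 5" using c dc[of f] df by simp
  have "resultant (Polynomial.smult c (pcompose f ?L)) (pderiv (Polynomial.smult c (pcompose f ?L)))
     = c ^ 4 * ((c * al) ^ 5 * (al ^ 20 * resultant f (pderiv f)))"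
    unfolding pd using c al
    by (simp add: resultant_smult_left resultant_smult_right res_pcompose_lin dc dd df)
  moreover have "lead_coeff (Polynomial.smult c (pcompose f ?L)) = c * (lead_coeff f * al ^ 5)"
    using dg lc[of f] df dc[of f] by simp
  moreover have "lead_coeff f \<noteq> 0" using df by (metis leading_coeff_0_iff zero_neq_numeral degree_0)
  ultimately show ?thesis using dg df c al unfolding poly_disc_def Let_def
    by (simp add: field_simps power_mult_distrib power_Suc[symmetric] del: power_Suc)
qed

lemma pcompose_power': "pcompose (p ^ n) q = (pcompose p q) ^ n"
  for p q :: "'a::comm_semiring_1 poly"
  by (induction n) (simp_all add: pcompose_mult pcompose_1)

lemma pcompose_as_sum:
  fixes f q :: "'a::comm_semiring_1 poly"
  assumes "degree f \<le> n"
  shows "pcompose f q = (\<Sum>i\<le>n. Polynomial.smult (coeff f i) (q ^ i))"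
proof -
  have "pcompose f q = pcompose (\<Sum>i\<le>n. monom (coeff f i) i) q"
    using poly_as_sum_of_monoms'[OF assms] by simp
  also have "\<dots> = (\<Sum>i\<le>n. Polynomial.smult (coeff f i) (q ^ i))"
    by (simp add: pcompose_sum monom_altdef pcompose_smult pcompose_power')
  finally show ?thesis .
qed

lemma hom_subst_affine:
  assumes "degree f \<le> n"
  shows "hom_subst n a b 0 1 f = pcompose f [:b, a:]"
  unfolding hom_subst_def using pcompose_as_sum[OF assms, of "[:b, a:]"]
  by (simp add: one_pCons[symmetric])

lemma hom_subst_pcompose:
  "pcompose (hom_subst n a b c d f) [:b0, a0:] = hom_subst n (a * a0) (b + a * b0) (c * a0) (d + c * b0) f"
proof -
  have l: "pcompose [:y, x:] [:b0, a0:] = [:x * b0 + y, x * a0:]" for x y :: rat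
    by (simp add: pcompose_pCons algebra_simps)
  show ?thesis unfolding hom_subst_def
    by (simp add: pcompose_sum pcompose_smult pcompose_mult pcompose_power' l)
qed

lemma hom_subst_0: "hom_subst n a b c d 0 = 0"
  unfolding hom_subst_def by simp

lemma rpoly_shift:
  fixes p :: "int poly" and s :: int
  assumes "degree p \<le> n"
  shows "rpoly (\<Sum>j\<le>n. Polynomial.smult (coeff p j * 4 ^ (n - j)) ([:s, 1:] ^ j))
       = Polynomial.smult (4 ^ n) (pcompose (rpoly p) [:of_int s / 4, 1 / 4:])"
proof -
  have L: "[:of_int s / 4, 1 / 4:] = Polynomial.smult (1/4) [:of_int s, 1 :: rat:]" by simp
  have dp: "degree (rpoly p) \<le> n" using assms by simp
  have "Polynomial.smult (4 ^ n) (pcompose (rpoly p) [:of_int s / 4, 1 / 4:])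
     = (\<Sum>j\<le>n. Polynomial.smult (4 ^ n * (of_int (coeff p j) * (1/4) ^ j)) ([:of_int s, 1:] ^ j))"
    unfolding pcompose_as_sum[OF dp] L smult_power
    by (simp add: smult_sum2 of_int_hom.coeff_map_poly_hom)
  also have "\<dots> = (\<Sum>j\<le>n. Polynomial.smult (of_int (coeff p j * 4 ^ (n - j))) ([:of_int s, 1:] ^ j))"
  proof (rule sum.cong[OF refl])
    fix j assume "j \<in> {..n}"
    hence "(4::rat) ^ n = 4 ^ (n - j) * 4 ^ j" by (simp add: power_add[symmetric])
    thus "Polynomial.smult (4 ^ n * (of_int (coeff p j) * (1/4) ^ j)) ([:of_int s, 1:] ^ j)
        = Polynomial.smult (of_int (coeff p j * 4 ^ (n - j))) ([:of_int s, 1 :: rat:] ^ j)"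
      by (simp add: power_one_over field_simps)
  qed
  also have "\<dots> = rpoly (\<Sum>j\<le>n. Polynomial.smult (coeff p j * 4 ^ (n - j)) ([:s, 1:] ^ j))"
  proof -
    have pw: "rpoly (pCons s 1 ^ j) = pCons (of_int s) 1 ^ j" for j
      by (simp add: of_int_poly_hom.hom_power)
    show ?thesis by (simp add: of_int_hom.map_poly_hom_smult of_int_poly_hom.hom_sum pw)
  qed
  finally show ?thesis ..
qed

lemma ring_id:
  fixes K Q P E :: "'a::comm_ring_1"
  shows "(K + 16 * E * Q) * (K + 16 * E * Q) + - (2 * K) * (K + 16 * E * Q) -
     (K * K + - (2 * K) * K + E * E * (1024 * P + 256 * (Q * Q))) = - (32 * E * (32 * E) * P)"
  by (simp add: algebra_simps)

lemma smult_as_mult: "Polynomial.smult c p = [:c:] * p"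
  by simp

lemma same_curve_trans:
  fixes G Pr Qr :: "rat poly" and s :: rat
  assumes GM: "pcompose G [:-s, 4:] = Polynomial.smult 1024 Pr + Polynomial.smult 256 (Qr^2)"
    and sc: "same_curve (G, 0) E'"
  shows "same_curve (Pr, Qr) E'"
proof -
  obtain a b c d e H where ch: "weq_change a b c d e H (G, 0) E'"
    using sc unfolding same_curve_def by blast
  obtain P' Q' where E': "E' = (P', Q')" by fastforce
  let ?M = "[:-s, 4:]"
  define K where "K = pcompose H ?M"
  define T where "T = hom_subst 3 (a * 4) (b + a * (-s)) (c * 4) (d + c * (-s)) Q'"
  define W where "W = hom_subst 6 (a * 4) (b + a * (-s)) (c * 4) (d + c * (-s)) P'"
  from ch have det: "a * d - b * c \<noteq> 0" and e0: "e \<noteq> 0"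
    and h1: "Polynomial.smult 2 H + hom_subst 3 a b c d Q' = 0"
    and h2: "H^2 + hom_subst 3 a b c d Q' * H - hom_subst 6 a b c d P' = - Polynomial.smult (e^2) G"
    unfolding weq_change_def E' by auto
  have h1': "Polynomial.smult 2 K + T = 0"
    using arg_cong[OF h1, of "\<lambda>x. pcompose x ?M"] unfolding K_def T_def
    by (simp add: pcompose_add pcompose_smult hom_subst_pcompose)
  have h2': "K^2 + T * K - W = - Polynomial.smult (e^2) (Polynomial.smult 1024 Pr + Polynomial.smult 256 (Qr^2))"
    using arg_cong[OF h2, of "\<lambda>x. pcompose x ?M"] unfolding K_def T_def W_def
    by (simp add: pcompose_add pcompose_diff pcompose_smult pcompose_mult pcompose_power' pcompose_uminus hom_subst_pcompose GM)
  have T: "T = - Polynomial.smult 2 K" using h1' by (simp add: eq_neg_iff_add_eq_0 add.commute)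
  have W: "W = K^2 + T * K + Polynomial.smult (e^2) (Polynomial.smult 1024 Pr + Polynomial.smult 256 (Qr^2))"
    using h2' by (simp add: algebra_simps)
  have "weq_change (a * 4) (b + a * (-s)) (c * 4) (d + c * (-s)) (32 * e) (K + Polynomial.smult (16 * e) Qr) (Pr, Qr) E'"
    unfolding weq_change_def E' fst_conv snd_conv T_def[symmetric] W_def[symmetric]
  proof (intro conjI)
    show "a * 4 * (d + c * - s) - (b + a * - s) * (c * 4) \<noteq> 0" using det by (simp add: algebra_simps)
    show "32 * e \<noteq> 0" using e0 by simp
    show "Polynomial.smult 2 (K + Polynomial.smult (16 * e) Qr) + T = Polynomial.smult (32 * e) Qr"
      unfolding T by (simp add: smult_add_right)
    show "(K + Polynomial.smult (16 * e) Qr)\<^sup>2 + T * (K + Polynomial.smult (16 * e) Qr) - W =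
      - Polynomial.smult ((32 * e)\<^sup>2) Pr"
    proof -
      have cm: "[:x * y:] = [:x:] * [:y:]" for x y :: rat by simp
      show ?thesis
        unfolding W unfolding T unfolding smult_as_mult power2_eq_square
        by (simp only: cm numeral_poly[symmetric]) (rule ring_id)
    qed
  qed
  thus ?thesis unfolding same_curve_def by blast
qed

lemma rat_root_denom:
  fixes fi :: "int poly" and r :: rat
  assumes df: "degree fi = 5" and lf: "lead_coeff fi = 4" and root: "poly (rpoly fi) r = 0"
  shows "\<exists>s::int. r = of_int s / 4"
proof -
  obtain a b where q: "quotient_of r = (a, b)" by fastforce
  have bpos: "b > 0" using q quotient_of_denom_pos by blast
  have cop: "coprime a b" using q quotient_of_coprime by blast
  have rab: "r = of_int a / of_int b" using q quotient_of_div by blast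
  have "poly (rpoly fi) r = (\<Sum>i\<le>5. of_int (coeff fi i) * r ^ i)"
    by (simp add: poly_altdef df of_int_hom.coeff_map_poly_hom)
  hence "(\<Sum>i\<le>5. of_int (coeff fi i) * r ^ i) * of_int b ^ 5 = 0" using root by simp
  hence "(\<Sum>i\<le>5. of_int (coeff fi i) * r ^ i * of_int b ^ 5) = 0" by (simp add: sum_distrib_right)
  moreover have "of_int (coeff fi i) * r ^ i * of_int b ^ 5 = (of_int (coeff fi i * a ^ i * b ^ (5 - i)) :: rat)"
    if "i \<in> {..5}" for i
  proof -
    have "(of_int b :: rat) ^ 5 = of_int b ^ i * of_int b ^ (5 - i)" using that by (simp add: power_add[symmetric])
    thus ?thesis unfolding rab using bpos by (simp add: field_simps power_divide)
  qed
  ultimately have "(\<Sum>i\<le>5. (of_int (coeff fi i * a ^ i * b ^ (5 - i)) :: rat)) = 0"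
    by simp
  hence "(of_int (\<Sum>i\<le>5. coeff fi i * a ^ i * b ^ (5 - i)) :: rat) = 0" by simp
  hence S: "(\<Sum>i\<le>5. coeff fi i * a ^ i * b ^ (5 - i)) = 0" by (simp only: of_int_eq_0_iff)
  have split: "(\<Sum>i\<le>5. coeff fi i * a ^ i * b ^ (5 - i)) = (\<Sum>i<5. coeff fi i * a ^ i * b ^ (5 - i)) + 4 * a ^ 5"
  proof -
    have "{..5::nat} = insert 5 {..<5}" by auto
    thus ?thesis using lf df by simp
  qed
  have "b dvd (\<Sum>i<5. coeff fi i * a ^ i * b ^ (5 - i))"
  proof (rule dvd_sum)
    fix i assume "i \<in> {..<5::nat}"
    hence "b dvd b ^ (5 - i)" by (simp add: dvd_power)
    thus "b dvd coeff fi i * a ^ i * b ^ (5 - i)" by simp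
  qed
  moreover have "4 * a ^ 5 = - (\<Sum>i<5. coeff fi i * a ^ i * b ^ (5 - i))" using S split by simp
  ultimately have "b dvd 4 * a ^ 5" by (simp only: dvd_minus_iff)
  moreover have "coprime b (a ^ 5)" using cop by (simp add: coprime_commute)
  ultimately have bd: "b dvd 4" using coprime_dvd_mult_left_iff by blast
  then obtain k where k: "4 = b * k" by blast
  have k': "(4::rat) = of_int b * of_int k" using k by (metis of_int_mult of_int_numeral)
  have "r = of_int (k * a) / 4" unfolding rab using bpos k'
    by (simp add: field_simps)
  thus ?thesis by blast
qed

theorem lemma3p1:
  fixes P Q :: "int poly"
  assumes weq: "is_weq (rpoly P, rpoly Q)"
    and degQ: "degree Q \<le> 2"
    and degP: "degree P = 5" and monicP: "lead_coeff P = 1"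
    and glob_min: "globally_minimal (rpoly P, rpoly Q)"
    and odd_disc: "\<exists>D::int. weq_disc (rpoly P, rpoly Q) = of_int D \<and> odd D"
    and two_wpts: "card (rat_weierstrass_points (rpoly P, rpoly Q)) \<ge> 2"
  shows "\<exists>F :: int poly. degree F = 4 \<and> lead_coeff F = 1 \<and>
           is_weq (rpoly ([:0, 1:] * F), 0) \<and>
           same_curve (rpoly P, rpoly Q) (rpoly ([:0, 1:] * F), 0) \<and>
           weq_disc (rpoly ([:0, 1:] * F), 0) = 2 ^ 40 * weq_disc (rpoly P, rpoly Q) \<and>
           (\<forall>p. prime p \<and> p \<noteq> 2 \<longrightarrow> minimal_at p (rpoly ([:0, 1:] * F), 0))"
proof -
  define Pr where "Pr = rpoly P"
  define Qr where "Qr = rpoly Q"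
  define fi where "fi = Polynomial.smult 4 P + Q ^ 2"
  define fr where "fr = Polynomial.smult 4 Pr + Qr ^ 2"
  have fr_fi: "fr = rpoly fi" unfolding fr_def fi_def Pr_def Qr_def
    by (simp add: of_int_poly_hom.hom_add of_int_hom.map_poly_hom_smult of_int_poly_hom.hom_power)
  have dQ2: "degree (Q ^ 2) \<le> 4" using degree_power_le[of Q 2] degQ by linarith
  have dfi: "degree fi = 5" unfolding fi_def
    by (subst degree_add_eq_left) (use dQ2 degP in auto)
  have cQ2: "coeff (Q ^ 2) 5 = 0" using dQ2 by (simp add: coeff_eq_0)
  have lfi: "lead_coeff fi = 4" unfolding dfi unfolding fi_def using monicP degP cQ2 by simp
  have dfr: "degree fr = 5" using dfi fr_fi by simp
  have lfr: "lead_coeff fr = 4" using lfi fr_fi dfi by (simp add: of_int_hom.coeff_map_poly_hom)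
  have "\<exists>r. poly fr r = 0"
  proof (rule ccontr)
    assume no: "\<not> (\<exists>r. poly fr r = 0)"
    have "rat_weierstrass_points (rpoly P, rpoly Q) \<subseteq> {None}"
      using no unfolding rat_weierstrass_points_def Let_def fr_def Pr_def Qr_def by auto
    hence "card (rat_weierstrass_points (rpoly P, rpoly Q)) \<le> card {None :: rat option}"
      by (intro card_mono) auto
    thus False using two_wpts by simp
  qed
  then obtain r where root: "poly fr r = 0" by blast
  obtain s :: int where rs: "r = of_int s / 4"
    using rat_root_denom[OF dfi lfi] root fr_fi by blast
  define L where "L = [:of_int s / 4, 1 / 4 :: rat:]"
  have dL: "degree L = 1" unfolding L_def by simp
  define Pi where "Pi = (\<Sum>j\<le>5. Polynomial.smult (coeff P j * 4 ^ (5 - j)) ([:s, 1:] ^ j))"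
  define Qi where "Qi = (\<Sum>j\<le>2. Polynomial.smult (coeff Q j * 4 ^ (2 - j)) ([:s, 1:] ^ j))"
  define Gi where "Gi = Pi + Qi ^ 2"
  define Gr where "Gr = Polynomial.smult 256 (pcompose fr L)"
  have rPi: "rpoly Pi = Polynomial.smult 1024 (pcompose Pr L)"
    unfolding Pi_def Pr_def L_def using rpoly_shift[of P 5 s] degP by simp
  have rQi: "rpoly Qi = Polynomial.smult 16 (pcompose Qr L)"
    unfolding Qi_def Qr_def L_def using rpoly_shift[of Q 2 s] degQ by simp
  have rGi: "rpoly Gi = Gr"
    unfolding Gi_def Gr_def fr_def
    by (simp add: of_int_poly_hom.hom_add of_int_poly_hom.hom_power rPi rQi pcompose_add pcompose_smult
        pcompose_power' smult_power smult_add_right)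
  have dGr: "degree Gr = 5" unfolding Gr_def using dfr dL by (simp add: degree_pcompose)
  have lGr: "lead_coeff Gr = 1"
  proof -
    have "coeff (pcompose fr L) 5 = 4 * (1/4) ^ 5"
      using lead_coeff_comp[of L fr] dL lfr dfr unfolding L_def by (simp add: degree_pcompose)
    moreover have "(1024::rat) * (1/4) ^ 5 = 1" by (simp add: power_one_over)
    ultimately show ?thesis using dGr unfolding Gr_def by simp
  qed
  have c0Gr: "coeff Gr 0 = 0"
    unfolding Gr_def using root rs by (simp add: poly_0_coeff_0[symmetric] poly_pcompose L_def)
  have dGi: "degree Gi = 5" using dGr rGi by (metis of_int_hom.degree_map_poly_hom)
  have cGi: "coeff Gi i = 0 \<longleftrightarrow> coeff Gr i = 0" for i
    using rGi by (metis of_int_hom.coeff_map_poly_hom of_int_eq_0_iff)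
  have cGi1: "coeff Gi 5 = 1" using lGr rGi dGr by (metis of_int_hom.coeff_map_poly_hom of_int_eq_1_iff)
  obtain a0 F where GF: "Gi = pCons a0 F" by (cases Gi) auto
  have a00: "a0 = 0" using cGi[of 0] c0Gr GF by simp
  have XF: "[:0, 1:] * F = Gi" using GF a00 by simp
  have F0: "F \<noteq> 0" using GF a00 dGi by auto
  have dF: "degree F = 4" using dGi GF a00 F0 by simp
  have lF: "lead_coeff F = 1" using cGi1 GF dF by (simp add: numeral_eq_Suc)
  have Erp: "rpoly ([:0, 1:] * F) = Gr" using XF rGi by simp
  have Gr4: "Polynomial.smult 4 Gr = Polynomial.smult 1024 (pcompose fr [:of_int s / 4, 1/4:])"
    unfolding Gr_def L_def by simp
  have d4: "degree (Polynomial.smult 4 Gr) = 5" using dGr by simp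
  have l4: "lead_coeff (Polynomial.smult 4 Gr) = 4" using lGr dGr by simp
  have discE: "weq_disc (Gr, 0) = 2 ^ 40 * weq_disc (Pr, Qr)"
  proof -
    have "weq_disc (Gr, 0) = 16 * poly_disc (Polynomial.smult 4 Gr) / 2 ^ 12"
      unfolding weq_disc_def sextic_disc_def using d4 l4 by simp
    also have "poly_disc (Polynomial.smult 4 Gr) = 1024 ^ 8 * (1/4) ^ 20 * poly_disc fr"
      unfolding Gr4 by (rule poly_disc_lin5) (use dfr in auto)
    finally have 1: "weq_disc (Gr, 0) = 16 * (1024 ^ 8 * (1/4) ^ 20 * poly_disc fr) / 2 ^ 12" .
    have 2: "weq_disc (Pr, Qr) = 16 * poly_disc fr / 2 ^ 12"
      unfolding weq_disc_def fst_conv snd_conv fr_def[symmetric] sextic_disc_def using dfr lfr by simp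
    show ?thesis unfolding 1 2 by (simp add: power_one_over)
  qed
  have disc0: "weq_disc (Pr, Qr) \<noteq> 0" using weq unfolding is_weq_def Pr_def Qr_def by simp
  have isE: "is_weq (Gr, 0)" unfolding is_weq_def using dGr discE disc0 by simp
  have Lc: "pcompose L [:- of_int s, 4:] = [:0, 1:]" unfolding L_def
    by (simp add: pcompose_pCons)
  have GM: "pcompose Gr [:- of_int s, 4:] = Polynomial.smult 1024 Pr + Polynomial.smult 256 (Qr ^ 2)"
  proof -
    have i: "pcompose fr [:0, 1:] = fr" by (rule pcompose_idR)
    show ?thesis unfolding Gr_def pcompose_smult pcompose_assoc[symmetric] Lc i
      by (simp add: fr_def smult_add_right)
  qed
  have hs6: "hom_subst 6 4 (- of_int s) 0 1 Gr = pcompose Gr [:- of_int s, 4:]"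
    by (rule hom_subst_affine) (simp add: dGr)
  have sc: "same_curve (Pr, Qr) (Gr, 0)"
    unfolding same_curve_def
  proof (intro exI)
    show "weq_change 4 (- of_int s) 0 1 32 (Polynomial.smult 16 Qr) (Pr, Qr) (Gr, 0)"
      unfolding weq_change_def fst_conv snd_conv hom_subst_0 hs6 GM
      by (simp add: smult_power)
  qed
  obtain D :: int where D: "weq_disc (Pr, Qr) = of_int D" and oD: "odd D"
    using odd_disc unfolding Pr_def Qr_def by blast
  have D0: "D \<noteq> 0" using oD by auto
  have min: "minimal_at p (Gr, 0)" if p: "prime p" "p \<noteq> 2" for p
  proof -
    have pint: "p_integral p (of_int k)" for k
          proof -
      have "p \<noteq> 1" using p(1) by auto
      thus ?thesis unfolding p_integral_def by simp
    qed
    have intE: "integral_at p (Gr, 0)" unfolding integral_at_def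
      using pint rGi by (metis fst_conv snd_conv coeff_0 of_int_0 of_int_hom.coeff_map_poly_hom)
    have pi: "prime (int p)" using p by simp
    have nd: "\<not> int p dvd 2 ^ 40"
    proof
      assume "int p dvd 2 ^ 40"
      hence "int p dvd 2" using prime_dvd_power pi by blast
      hence "p dvd 2" by presburger
      hence "p \<le> 2" by (simp add: dvd_imp_le)
      thus False using p prime_ge_2_nat[of p] by simp
    qed
    have vE: "rat_val p (weq_disc (Gr, 0)) = rat_val p (weq_disc (Pr, Qr))"
    proof -
      have rv: "rat_val p (of_int k) = int (multiplicity (int p) k)" for k
        unfolding rat_val_def by simp
      have e: "weq_disc (Gr, 0) = of_int (2 ^ 40 * D)" using discE D by simp
      have "rat_val p (weq_disc (Gr, 0)) = int (multiplicity (int p) (2 ^ 40 * D))"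
        by (simp only: e rv)
      also have "multiplicity (int p) (2 ^ 40 * D) = multiplicity (int p) (2 ^ 40) + multiplicity (int p) D"
        by (rule prime_elem_multiplicity_mult_distrib) (use pi D0 in auto)
      also have "multiplicity (int p) (2 ^ 40) = 0" using nd by (rule not_dvd_imp_multiplicity_0)
      finally show ?thesis unfolding D rv by simp
    qed
    have mPQ: "minimal_at p (Pr, Qr)" using glob_min p unfolding globally_minimal_def Pr_def Qr_def by blast
    show ?thesis unfolding minimal_at_def
    proof (intro conjI allI impI)
      show "is_weq (Gr, 0)" by (rule isE)
      show "integral_at p (Gr, 0)" by (rule intE)
      fix E' assume "is_weq E' \<and> same_curve (Gr, 0) E' \<and> integral_at p E'"
      hence "is_weq E' \<and> same_curve (Pr, Qr) E' \<and> integral_at p E'"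
        using same_curve_trans[OF GM] by blast
      hence "rat_val p (weq_disc (Pr, Qr)) \<le> rat_val p (weq_disc E')"
        using mPQ unfolding minimal_at_def by blast
      thus "rat_val p (weq_disc (Gr, 0)) \<le> rat_val p (weq_disc E')" using vE by simp
    qed
  qed
  show ?thesis
    apply (rule exI[of _ F])
    unfolding Erp using dF lF isE sc discE min unfolding Pr_def Qr_def by blast
qed

end
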